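(* Let $p$ be a (positive) stochastic choice function on a finite set $X$ such that there exist three alternatives $a,b,c\in X$ with $a\not\sim_p b$, $b\not\sim_p c$ and $a\not\sim_p c$. Then $p$ satisfies Independence of Symmetric Alternatives if and only if $p$ is a nondegenerate Nested Stochastic Choice (NSC).
   Context: $X$ is a finite set of alternatives and $\mathscr{A}$ is the collection of all nonempty subsets of $X$ (menus). A stochastic choice function is a map $p:X\times\mathscr{A}\to[0,1]$ with $\sum_{a\in A}p(a,A)=1$ for every $A\in\mathscr{A}$ and $p(x,A)=0$ for $x\notin A$; throughout, $p$ is positive: $p(a,A)>0$ whenever $a\in A$. For $B\subseteq X$ write $p(B,A)=\sum_{b\in B}p(b,A)$, and write $A\cup x$ for $A\cup\{x\}$. $p$ satisfies IIA at $a,b$ if $\frac{p(a,A)}{p(b,A)}=\frac{p(a,\{a,b\})}{p(b,\{a,b\})}$ for every $A\in\mathscr{A}$ with $a,b\in A$. Alternatives $a,b$ are revealed categorically similar, written $a\sim_p b$, if $p$ satisfies IIA at $a,b$. Independence of Symmetric Alternatives (ISA): for any $A\in\mathscr{A}$, $a,b\in A$ and $x\notin A$, if either ($a\sim_p x$ and $b\sim_p x$) or ($a\not\sim_p x$ and $b\not\sim_p x$), then $\frac{p(a,A)}{p(b,A)}=\frac{p(a,A\cup x)}{p(b,A\cup x)}$. $p$ is an NSC if there exist a partition $X_1,\dots,X_K$ of $X$, a function $u:X\to\mathbb{R}_{++}$ and a function $v:\bigcup_{i=1}^K 2^{X_i}\to\mathbb{R}_+$ with $v(\emptyset)=0$ such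 that for every $A\in\mathscr{A}$ and $a\in A\cap X_i$, $p(a,A)=\frac{v(A\cap X_i)}{\sum_{j=1}^K v(A\cap X_j)}\cdot\frac{u(a)}{\sum_{b\in A\cap X_i}u(b)}$. Such an NSC (with representation $(v,u,\{X_i\}_{i=1}^K)$) is nondegenerate if there is at most one index $i\le K$ for which there exists $a\in X_i$ with $\frac{\sum_{x\in A_i}u(x)}{v(A_i)}=\frac{u(a)}{v(\{a\})}$ for every $A_i\subseteq X_i$ with $a\in A_i$. *)

theory Defs
  imports "HOL-Analysis.Analysis"
begin

definition menus :: "'a set \<Rightarrow> 'a set set" where
  "menus X = {A. A \<subseteq> X \<and> A \<noteq> {}}"

definition pos_scf :: "'a set \<Rightarrow> ('a \<Rightarrow> 'a set \<Rightarrow> real) \<Rightarrow> bool" where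
  "pos_scf X p \<longleftrightarrow> finite X \<and>
     (\<forall>A\<in>menus X. (\<forall>x. 0 \<le> p x A \<and> p x A \<le> 1) \<and> (\<Sum>a\<in>A. p a A) = 1
        \<and> (\<forall>x. x \<notin> A \<longrightarrow> p x A = 0) \<and> (\<forall>a\<in>A. p a A > 0))"

definition IIA_at :: "'a set \<Rightarrow> ('a \<Rightarrow> 'a set \<Rightarrow> real) \<Rightarrow> 'a \<Rightarrow> 'a \<Rightarrow> bool" where
  "IIA_at X p a b \<longleftrightarrow> (\<forall>A\<in>menus X. a \<in> A \<and> b \<in> A \<longrightarrow>
      p a A / p b A = p a {a, b} / p b {a, b})"

definition cat_sim :: "'a set \<Rightarrow> ('a \<Rightarrow> 'a set \<Rightarrow> real) \<Rightarrow> 'a \<Rightarrow> 'a \<Rightarrow> bool" where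
  "cat_sim X p a b \<longleftrightarrow> IIA_at X p a b"

definition ISA :: "'a set \<Rightarrow> ('a \<Rightarrow> 'a set \<Rightarrow> real) \<Rightarrow> bool" where
  "ISA X p \<longleftrightarrow> (\<forall>A\<in>menus X. \<forall>a\<in>A. \<forall>b\<in>A. \<forall>x\<in>X - A.
      ((cat_sim X p a x \<and> cat_sim X p b x) \<or> (\<not> cat_sim X p a x \<and> \<not> cat_sim X p b x))
      \<longrightarrow> p a A / p b A = p a (insert x A) / p b (insert x A))"

definition is_partition :: "'a set \<Rightarrow> 'a set set \<Rightarrow> bool" where
  "is_partition X P \<longleftrightarrow> (\<forall>B\<in>P. B \<noteq> {}) \<and> \<Union>P = X \<and>
     (\<forall>B\<in>P. \<forall>C\<in>P. B \<noteq> C \<longrightarrow> B \<inter> C = {})"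

text \<open>NSC representation (v, u, P). The function v is only relevant on subsets of blocks;
  since blocks are disjoint, a single v on sets represents v on the union of their power sets.\<close>
definition NSC_rep :: "'a set \<Rightarrow> ('a \<Rightarrow> 'a set \<Rightarrow> real) \<Rightarrow> ('a set \<Rightarrow> real) \<Rightarrow> ('a \<Rightarrow> real)
    \<Rightarrow> 'a set set \<Rightarrow> bool" where
  "NSC_rep X p v u P \<longleftrightarrow> is_partition X P \<and> (\<forall>x\<in>X. u x > 0) \<and> v {} = 0 \<and>
     (\<forall>B\<in>P. \<forall>S. S \<subseteq> B \<longrightarrow> v S \<ge> 0) \<and>
     (\<forall>A\<in>menus X. \<forall>B\<in>P. \<forall>a\<in>A \<inter> B.
        p a A = v (A \<inter> B) / (\<Sum>C\<in>P. v (A \<inter> C)) * (u a / (\<Sum>b\<in>A \<inter> B. u b)))"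

definition NSC :: "'a set \<Rightarrow> ('a \<Rightarrow> 'a set \<Rightarrow> real) \<Rightarrow> bool" where
  "NSC X p \<longleftrightarrow> (\<exists>v u P. NSC_rep X p v u P)"

definition degenerate_block :: "('a set \<Rightarrow> real) \<Rightarrow> ('a \<Rightarrow> real) \<Rightarrow> 'a set \<Rightarrow> bool" where
  "degenerate_block v u B \<longleftrightarrow> (\<exists>a\<in>B. \<forall>S. S \<subseteq> B \<and> a \<in> S \<longrightarrow>
      (\<Sum>x\<in>S. u x) / v S = u a / v {a})"

definition nondegenerate_NSC :: "'a set \<Rightarrow> ('a \<Rightarrow> 'a set \<Rightarrow> real) \<Rightarrow> bool" where
  "nondegenerate_NSC X p \<longleftrightarrow> (\<exists>v u P. NSC_rep X p v u P \<and>
      (\<forall>B\<in>P. \<forall>C\<in>P. degenerate_block v u B \<and> degenerate_block v u C \<longrightarrow> B = C))"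

end

theory Submission
  imports Defs
begin


lemma menusI: "A \<subseteq> X \<Longrightarrow> A \<noteq> {} \<Longrightarrow> A \<in> menus X"
  by (simp add: menus_def)
lemma menusD: "A \<in> menus X \<Longrightarrow> A \<subseteq> X \<and> A \<noteq> {}"
  by (simp add: menus_def)

lemma pscf_pos: "pos_scf X p \<Longrightarrow> A \<in> menus X \<Longrightarrow> a \<in> A \<Longrightarrow> p a A > 0"
  by (simp add: pos_scf_def)
lemma pscf_fin: "pos_scf X p \<Longrightarrow> finite X"
  by (simp add: pos_scf_def)

lemma cat_sim_sym: "cat_sim X p x y \<Longrightarrow> cat_sim X p y x"
  unfolding cat_sim_def IIA_at_def
proof (intro ballI impI)
  fix A assume h: "\<forall>A\<in>menus X. x \<in> A \<and> y \<in> A \<longrightarrow> p x A / p y A = p x {x, y} / p y {x, y}"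
    and A: "A \<in> menus X" "y \<in> A \<and> x \<in> A"
  have "p x A / p y A = p x {x, y} / p y {x, y}" using h A by auto
  then have "inverse (p x A / p y A) = inverse (p x {x, y} / p y {x, y})" by simp
  then show "p y A / p x A = p y {y, x} / p x {y, x}" by (simp add: insert_commute)
qed

lemma part_unique: "is_partition X P \<Longrightarrow> B \<in> P \<Longrightarrow> C \<in> P \<Longrightarrow> x \<in> B \<Longrightarrow> x \<in> C \<Longrightarrow> B = C"
  unfolding is_partition_def by blast
lemma part_ex: "is_partition X P \<Longrightarrow> x \<in> X \<Longrightarrow> \<exists>B\<in>P. x \<in> B"
  unfolding is_partition_def by blast
lemma part_sub: "is_partition X P \<Longrightarrow> B \<in> P \<Longrightarrow> B \<subseteq> X"
  unfolding is_partition_def by blast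

lemma rep_ratio:
  assumes rep: "NSC_rep X p v u P" and ps: "pos_scf X p" and A: "A \<in> menus X"
    and B: "B \<in> P" and C: "C \<in> P" and a: "a \<in> A \<inter> B" and b: "b \<in> A \<inter> C"
  shows "p a A / p b A = (v (A\<inter>B) * u a / (\<Sum>z\<in>A\<inter>B. u z)) / (v (A\<inter>C) * u b / (\<Sum>z\<in>A\<inter>C. u z))"
    and "v (A \<inter> B) \<noteq> 0"
proof -
  define D where "D = (\<Sum>C\<in>P. v (A\<inter>C))"
  have pa: "p a A = v (A\<inter>B) / D * (u a / (\<Sum>z\<in>A\<inter>B. u z))"
    using rep A B a unfolding NSC_rep_def D_def by blast
  have pb: "p b A = v (A\<inter>C) / D * (u b / (\<Sum>z\<in>A\<inter>C. u z))"
    using rep A C b unfolding NSC_rep_def D_def by blast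
  have "p a A > 0" using pscf_pos[OF ps A] a by blast
  then have D: "D \<noteq> 0" and vB: "v (A\<inter>B) \<noteq> 0" using pa by auto
  show "v (A \<inter> B) \<noteq> 0" by fact
  show "p a A / p b A = (v (A\<inter>B) * u a / (\<Sum>z\<in>A\<inter>B. u z)) / (v (A\<inter>C) * u b / (\<Sum>z\<in>A\<inter>C. u z))"
    unfolding pa pb using D by (simp add: divide_simps)
qed

lemma rep_usum_pos:
  assumes rep: "NSC_rep X p v u P" and ps: "pos_scf X p" and "S \<subseteq> X" "S \<noteq> {}"
  shows "(\<Sum>z\<in>S. u z) > 0"
proof -
  have "finite S" using pscf_fin[OF ps] assms(3) finite_subset by blast
  moreover have "\<forall>x\<in>S. u x > 0" using rep assms(3) unfolding NSC_rep_def by blast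
  ultimately show ?thesis using assms(4) by (simp add: sum_pos)
qed

lemma rep_upos: "NSC_rep X p v u P \<Longrightarrow> x \<in> X \<Longrightarrow> u x > 0"
  unfolding NSC_rep_def by blast


lemma rep_deg_sim:
  assumes rep: "NSC_rep X p v u P" and ps: "pos_scf X p"
    and B: "B \<in> P" and C: "C \<in> P" and BC: "B \<noteq> C" and x: "x \<in> B" and y: "y \<in> C"
    and dB: "\<forall>S. S \<subseteq> B \<and> x \<in> S \<longrightarrow> (\<Sum>z\<in>S. u z) / v S = u x / v {x}"
    and dC: "\<forall>S. S \<subseteq> C \<and> y \<in> S \<longrightarrow> (\<Sum>z\<in>S. u z) / v S = u y / v {y}"
  shows "cat_sim X p x y"
proof -
  have part: "is_partition X P" using rep unfolding NSC_rep_def by blast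
  have BX: "B \<subseteq> X" and CX: "C \<subseteq> X" using part_sub[OF part] B C by auto
  have dis: "B \<inter> C = {}" using part BC B C unfolding is_partition_def by blast
  have xX: "x \<in> X" and yX: "y \<in> X" using BX CX x y by auto
  have vx: "v {x} \<noteq> 0"
  proof -
    have "{x} \<in> menus X" using xX by (simp add: menus_def)
    moreover have "{x} \<inter> B = {x}" using x by auto
    ultimately show ?thesis using rep_ratio(2)[OF rep ps _ B B, of "{x}" x x] by auto
  qed
  have vy: "v {y} \<noteq> 0"
  proof -
    have "{y} \<in> menus X" using yX by (simp add: menus_def)
    moreover have "{y} \<inter> C = {y}" using y by auto
    ultimately show ?thesis using rep_ratio(2)[OF rep ps _ C C, of "{y}" y y] by auto
  qed
  have ux: "u x > 0" and uy: "u y > 0" using rep_upos[OF rep] xX yX by auto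
  have key: "p x A / p y A = v {x} / v {y}" if A: "A \<in> menus X" "x \<in> A" "y \<in> A" for A
  proof -
    have AX: "A \<subseteq> X" using A(1) by (simp add: menus_def)
    have xa: "x \<in> A \<inter> B" and ya: "y \<in> A \<inter> C" using A x y by auto
    note r = rep_ratio(1)[OF rep ps A(1) B C xa ya]
    have n1: "v (A\<inter>B) \<noteq> 0" using rep_ratio(2)[OF rep ps A(1) B C xa ya] .
    have n2: "v (A\<inter>C) \<noteq> 0" using rep_ratio(2)[OF rep ps A(1) C B ya xa] .
    have s1: "(\<Sum>z\<in>A\<inter>B. u z) > 0" using rep_usum_pos[OF rep ps, of "A\<inter>B"] AX xa by blast
    have s2: "(\<Sum>z\<in>A\<inter>C. u z) > 0" using rep_usum_pos[OF rep ps, of "A\<inter>C"] AX ya by blast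
    have e1: "(\<Sum>z\<in>A\<inter>B. u z) / v (A\<inter>B) = u x / v {x}" using dB xa by blast
    have e2: "(\<Sum>z\<in>A\<inter>C. u z) / v (A\<inter>C) = u y / v {y}" using dC ya by blast
    have f1: "v (A\<inter>B) * u x / (\<Sum>z\<in>A\<inter>B. u z) = v {x}"
      using e1 n1 vx s1 ux by (simp add: field_simps)
    have f2: "v (A\<inter>C) * u y / (\<Sum>z\<in>A\<inter>C. u z) = v {y}"
      using e2 n2 vy s2 uy by (simp add: field_simps)
    show ?thesis using r f1 f2 by simp
  qed
  show ?thesis unfolding cat_sim_def IIA_at_def
  proof (intro ballI impI)
    fix A assume "A \<in> menus X" "x \<in> A \<and> y \<in> A"
    moreover have "{x, y} \<in> menus X" using xX yX by (simp add: menus_def)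
    ultimately show "p x A / p y A = p x {x, y} / p y {x, y}" using key by auto
  qed
qed

lemma rep_sim_deg:
  assumes rep: "NSC_rep X p v u P" and ps: "pos_scf X p"
    and B: "B \<in> P" and C: "C \<in> P" and BC: "B \<noteq> C" and x: "x \<in> B" and y: "y \<in> C"
    and sim: "cat_sim X p x y"
  shows "degenerate_block v u B"
proof -
  have part: "is_partition X P" using rep unfolding NSC_rep_def by blast
  have BX: "B \<subseteq> X" and CX: "C \<subseteq> X" using part_sub[OF part] B C by auto
  have dis: "B \<inter> C = {}" using part BC B C unfolding is_partition_def by blast
  have xX: "x \<in> X" and yX: "y \<in> X" using BX CX x y by auto
  have ux: "u x > 0" and uy: "u y > 0" using rep_upos[OF rep] xX yX by auto
  have pair: "{x,y} \<in> menus X" using xX yX by (simp add: menus_def)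
  have pB: "{x,y} \<inter> B = {x}" and pC: "{x,y} \<inter> C = {y}" using x y dis by auto
  have rp: "p x {x,y} / p y {x,y} = (v {x} * u x / u x) / (v {y} * u y / u y)"
    using rep_ratio(1)[OF rep ps pair B C, of x y] pB pC by simp
  have vx: "v {x} \<noteq> 0" using rep_ratio(2)[OF rep ps pair B C, of x y] pB x y by simp
  have vy: "v {y} \<noteq> 0" using rep_ratio(2)[OF rep ps pair C B, of y x] pC x y by simp
  show ?thesis unfolding degenerate_block_def
  proof (intro bexI[of _ x] allI impI)
    fix S assume S: "S \<subseteq> B \<and> x \<in> S"
    define M where "M = insert y S"
    have M: "M \<in> menus X" using S BX yX by (auto simp: M_def menus_def)
    have MB: "M \<inter> B = S" and MC: "M \<inter> C = {y}" using S dis y by (auto simp: M_def)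
    have xm: "x \<in> M \<inter> B" "y \<in> M \<inter> C" using S y MB MC by (auto simp: M_def)
    have rM: "p x M / p y M = (v S * u x / (\<Sum>z\<in>S. u z)) / (v {y} * u y / u y)"
      using rep_ratio(1)[OF rep ps M B C xm] MB MC by simp
    have vS: "v S \<noteq> 0" using rep_ratio(2)[OF rep ps M B C xm] MB by simp
    have sS: "(\<Sum>z\<in>S. u z) > 0" using rep_usum_pos[OF rep ps, of S] S BX by blast
    have "p x M / p y M = p x {x,y} / p y {x,y}"
      using sim M xm unfolding cat_sim_def IIA_at_def by blast
    then have "v S * u x / (\<Sum>z\<in>S. u z) = v {x}"
      using rM rp ux uy vy by (simp add: field_simps)
    then show "(\<Sum>z\<in>S. u z) / v S = u x / v {x}"
      using vS vx sS ux by (simp add: field_simps)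
  qed (fact x)
qed


lemma rep_same:
  assumes rep: "NSC_rep X p v u P" and ps: "pos_scf X p" and A: "A \<in> menus X"
    and B: "B \<in> P" and a: "a \<in> A \<inter> B" and b: "b \<in> A \<inter> B"
  shows "p a A / p b A = u a / u b"
proof -
  have AX: "A \<subseteq> X" using A by (simp add: menus_def)
  have n: "v (A\<inter>B) \<noteq> 0" using rep_ratio(2)[OF rep ps A B B a b] .
  have s: "(\<Sum>z\<in>A\<inter>B. u z) > 0" using rep_usum_pos[OF rep ps, of "A\<inter>B"] AX a by blast
  show ?thesis using rep_ratio(1)[OF rep ps A B B a b] n s by (simp add: field_simps)
qed

lemma rep_nondeg_sim:
  assumes rep: "NSC_rep X p v u P" and ps: "pos_scf X p"
    and nd: "\<forall>B\<in>P. \<forall>C\<in>P. degenerate_block v u B \<and> degenerate_block v u C \<longrightarrow> B = C"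
    and B: "B \<in> P" and C: "C \<in> P" and x: "x \<in> B" and y: "y \<in> C"
  shows "cat_sim X p x y \<longleftrightarrow> B = C"
proof
  assume s: "cat_sim X p x y"
  show "B = C"
  proof (rule ccontr)
    assume BC: "B \<noteq> C"
    have "degenerate_block v u B" using rep_sim_deg[OF rep ps B C BC x y s] .
    moreover have "degenerate_block v u C"
      using rep_sim_deg[OF rep ps C B _ y x cat_sim_sym[OF s]] BC by metis
    ultimately show False using nd B C BC by blast
  qed
next
  assume BC: "B = C"
  have part: "is_partition X P" using rep unfolding NSC_rep_def by blast
  show "cat_sim X p x y" unfolding cat_sim_def IIA_at_def
  proof (intro ballI impI)
    fix A assume A: "A \<in> menus X" "x \<in> A \<and> y \<in> A"
    have BX: "B \<subseteq> X" using part_sub[OF part B] .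
    have pr: "{x,y} \<in> menus X" using BX x y BC by (auto simp: menus_def)
    show "p x A / p y A = p x {x, y} / p y {x, y}"
      using rep_same[OF rep ps A(1) B, of x y] rep_same[OF rep ps pr B, of x y] A x y BC by auto
  qed
qed

lemma nsc_ISA:
  assumes ps: "pos_scf X p" and nd: "nondegenerate_NSC X p"
  shows "ISA X p"
proof -
  obtain v u P where rep: "NSC_rep X p v u P"
    and nd: "\<forall>B\<in>P. \<forall>C\<in>P. degenerate_block v u B \<and> degenerate_block v u C \<longrightarrow> B = C"
    using nd unfolding nondegenerate_NSC_def by blast
  have part: "is_partition X P" using rep unfolding NSC_rep_def by blast
  show ?thesis unfolding ISA_def
  proof (intro ballI impI)
    fix A a b x assume A: "A \<in> menus X" and a: "a \<in> A" and b: "b \<in> A" and x: "x \<in> X - A"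
      and cond: "cat_sim X p a x \<and> cat_sim X p b x \<or> \<not> cat_sim X p a x \<and> \<not> cat_sim X p b x"
    have AX: "A \<subseteq> X" using A by (simp add: menus_def)
    have A': "insert x A \<in> menus X" using AX x by (auto simp: menus_def)
    obtain B where B: "B \<in> P" "a \<in> B" using part_ex[OF part] a AX by blast
    obtain C where C: "C \<in> P" "b \<in> C" using part_ex[OF part] b AX by blast
    obtain D where D: "D \<in> P" "x \<in> D" using part_ex[OF part] x by blast
    show "p a A / p b A = p a (insert x A) / p b (insert x A)"
    proof (cases "B = C")
      case True
      then show ?thesis using rep_same[OF rep ps A B(1), of a b] rep_same[OF rep ps A' B(1), of a b]
          a b B C by auto
    next
      case False
      have dis: "B \<inter> C = {}" using part False B C unfolding is_partition_def by blast
      from cond show ?thesis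
      proof
        assume "cat_sim X p a x \<and> cat_sim X p b x"
        then have "B = D" "C = D" using rep_nondeg_sim[OF rep ps nd] B C D by auto
        then show ?thesis using False by simp
      next
        assume h: "\<not> cat_sim X p a x \<and> \<not> cat_sim X p b x"
        then have "B \<noteq> D" "C \<noteq> D" using rep_nondeg_sim[OF rep ps nd] B C D by auto
        then have "x \<notin> B" "x \<notin> C" using part_unique[OF part] B C D by blast+
        then have e1: "insert x A \<inter> B = A \<inter> B" and e2: "insert x A \<inter> C = A \<inter> C" by auto
        have a1: "a \<in> A \<inter> B" "b \<in> A \<inter> C" using a b B C by auto
        have a2: "a \<in> insert x A \<inter> B" "b \<in> insert x A \<inter> C" using a b B C by auto
        show ?thesis using rep_ratio(1)[OF rep ps A B(1) C(1) a1] rep_ratio(1)[OF rep ps A' B(1) C(1) a2]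
          e1 e2 by simp
      qed
    qed
  qed
qed



locale isa_loc =
  fixes X :: "'a set" and p :: "'a \<Rightarrow> 'a set \<Rightarrow> real"
  assumes pos: "pos_scf X p" and isa: "ISA X p"
begin

abbreviation cs where "cs x y \<equiv> cat_sim X p x y"

lemma fin: "finite X" using pscf_fin[OF pos] .
lemma ppos: "A \<in> menus X \<Longrightarrow> a \<in> A \<Longrightarrow> p a A > 0" using pscf_pos[OF pos] .

lemma cs_use: "cs x y \<Longrightarrow> A \<in> menus X \<Longrightarrow> x \<in> A \<Longrightarrow> y \<in> A \<Longrightarrow>
    p x A / p y A = p x {x,y} / p y {x,y}"
  unfolding cat_sim_def IIA_at_def by blast

lemma isa_use: "A \<in> menus X \<Longrightarrow> a \<in> A \<Longrightarrow> b \<in> A \<Longrightarrow> x \<in> X \<Longrightarrow> x \<notin> A \<Longrightarrow>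
    (cs a x \<and> cs b x) \<or> (\<not> cs a x \<and> \<not> cs b x) \<Longrightarrow>
    p a A / p b A = p a (insert x A) / p b (insert x A)"
  using isa unfolding ISA_def by blast

lemma cs_refl: "x \<in> X \<Longrightarrow> cs x x"
  unfolding cat_sim_def IIA_at_def
proof (intro ballI impI)
  fix A assume "x \<in> X" "A \<in> menus X" "x \<in> A \<and> x \<in> A"
  moreover have "{x} \<in> menus X" using \<open>x \<in> X\<close> by (simp add: menus_def)
  ultimately show "p x A / p x A = p x {x, x} / p x {x, x}"
    using ppos[of A x] ppos[of "{x}" x] by simp
qed

lemma cs_trans:
  assumes xX: "x \<in> X" and yX: "y \<in> X" and zX: "z \<in> X" and xy: "cs x y" and yz: "cs y z"
  shows "cs x z"
proof (cases "x = z \<or> y = x \<or> y = z")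
  case True
  then show ?thesis
  proof (elim disjE)
    assume "x = z" then show ?thesis using cs_refl[OF xX] by simp
  next
    assume "y = x" then show ?thesis using yz by simp
  next
    assume "y = z" then show ?thesis using xy by simp
  qed
next
  case False
  have zy: "cs z y" using cat_sim_sym[OF yz] .
  define K where "K = p x {x,y} / p y {x,y} * (p y {y,z} / p z {y,z})"
  have H: "p x A / p z A = K" if A: "A \<in> menus X" "x \<in> A" "y \<in> A" "z \<in> A" for A
  proof -
    have "p y A > 0" using ppos A by blast
    then have "p x A / p z A = (p x A / p y A) * (p y A / p z A)" by simp
    also have "\<dots> = K" unfolding K_def using cs_use[OF xy A(1,2,3)] cs_use[OF yz A(1,3,4)] by simp
    finally show ?thesis .
  qed
  have G: "p x A / p z A = K" if A: "A \<in> menus X" "x \<in> A" "z \<in> A" for A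
  proof (cases "y \<in> A")
    case True then show ?thesis using H A by blast
  next
    case False
    have AX: "A \<subseteq> X" using A by (simp add: menus_def)
    have "p x A / p z A = p x (insert y A) / p z (insert y A)"
      using isa_use[OF A(1) A(2) A(3) yX False] xy zy by blast
    also have "\<dots> = K" using H[of "insert y A"] AX yX A by (auto simp: menus_def)
    finally show ?thesis .
  qed
  show ?thesis unfolding cat_sim_def IIA_at_def
  proof (intro ballI impI)
    fix A assume A: "A \<in> menus X" "x \<in> A \<and> z \<in> A"
    have "{x,z} \<in> menus X" using xX zX by (simp add: menus_def)
    then show "p x A / p z A = p x {x, z} / p z {x, z}" using G A by simp
  qed
qed

definition cls where "cls x = {y \<in> X. cs x y}"

lemma cls_sub: "cls x \<subseteq> X" unfolding cls_def by blast
lemma self_cls: "x \<in> X \<Longrightarrow> x \<in> cls x" unfolding cls_def using cs_refl by blast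
lemma cls_eq:
  assumes xX: "x \<in> X" and y: "y \<in> cls x" shows "cls y = cls x"
proof -
  have yX: "y \<in> X" and xy: "cs x y" using y unfolding cls_def by auto
  have yx: "cs y x" using cat_sim_sym[OF xy] .
  have "cs y z \<longleftrightarrow> cs x z" if zX: "z \<in> X" for z
  proof
    assume "cs y z" then show "cs x z" using cs_trans[OF xX yX zX xy] by blast
  next
    assume "cs x z" then show "cs y z" using cs_trans[OF yX xX zX yx] by blast
  qed
  then show ?thesis unfolding cls_def by auto
qed
lemma cls_disj:
  assumes xX: "x \<in> X" and yX: "y \<in> X" and n: "\<not> cs x y" shows "cls x \<inter> cls y = {}"
proof (rule ccontr)
  assume "cls x \<inter> cls y \<noteq> {}"
  then obtain z where z: "z \<in> X" "cs x z" "cs y z" unfolding cls_def by auto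
  have "cs z y" using cat_sim_sym[OF z(3)] .
  then have "cs x y" using cs_trans[OF xX z(1) yX z(2)] by blast
  then show False using n by blast
qed
lemma in_cls: "x \<in> X \<Longrightarrow> y \<in> X \<Longrightarrow> y \<in> cls x \<longleftrightarrow> cs x y"
  unfolding cls_def by blast

definition e where "e x = (SOME y. y \<in> cls x)"
lemma e_in: "x \<in> X \<Longrightarrow> e x \<in> cls x" unfolding e_def using self_cls by (metis someI)
lemma e_eq: "x \<in> X \<Longrightarrow> y \<in> cls x \<Longrightarrow> e y = e x" unfolding e_def using cls_eq by simp

definition u where "u x = p x {x, e x} / p (e x) {x, e x}"

lemma u_pos: "x \<in> X \<Longrightarrow> u x > 0"
proof -
  assume x: "x \<in> X"
  have "e x \<in> X" using e_in[OF x] cls_sub by blast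
  then have "{x, e x} \<in> menus X" using x by (simp add: menus_def)
  then show ?thesis unfolding u_def using ppos by simp
qed

lemma U:
  assumes A: "A \<in> menus X" and x: "x \<in> A" and y: "y \<in> A" and xy: "cs x y"
  shows "p x A / p y A = u x / u y"
proof -
  have AX: "A \<subseteq> X" using A by (simp add: menus_def)
  have xX: "x \<in> X" and yX: "y \<in> X" using AX x y by auto
  have ycl: "y \<in> cls x" using in_cls xX yX xy by blast
  have ey: "e y = e x" using e_eq[OF xX ycl] .
  define f where "f = e x"
  have fcl: "f \<in> cls x" using e_in[OF xX] f_def by simp
  have fX: "f \<in> X" using fcl cls_sub by blast
  have xf: "cs x f" using fcl fX xX in_cls by blast
  have yf: "cs y f" using cls_eq[OF xX ycl] fcl yX fX in_cls by blast
  define T where "T = {x, y, f}"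
  have T: "T \<in> menus X" using xX yX fX by (simp add: T_def menus_def)
  have h1: "p x T / p f T = u x" unfolding u_def f_def[symmetric]
    using cs_use[OF xf T] by (simp add: T_def)
  have h2: "p y T / p f T = u y" unfolding u_def ey f_def[symmetric]
    using cs_use[OF yf T] by (simp add: T_def)
  have h3: "p x T / p y T = p x A / p y A" using cs_use[OF xy T] cs_use[OF xy A x y] by (simp add: T_def)
  have "p f T > 0" using ppos T by (simp add: T_def)
  then have "p x T / p y T = (p x T / p f T) / (p y T / p f T)" by simp
  then show ?thesis using h1 h2 h3 by simp
qed

definition ps where "ps S A = (\<Sum>s\<in>S. p s A)"

lemma blocksum:
  assumes A: "A \<in> menus X" and x: "x \<in> A"
  shows "ps (A \<inter> cls x) A = p x A / u x * (\<Sum>z\<in>A \<inter> cls x. u z)"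
proof -
  have AX: "A \<subseteq> X" using A by (simp add: menus_def)
  have xX: "x \<in> X" using AX x by auto
  have "p z A = p x A / u x * u z" if z: "z \<in> A \<inter> cls x" for z
  proof -
    have zX: "z \<in> X" using z cls_sub by blast
    have "cs x z" using z in_cls[OF xX zX] by blast
    then have "cs z x" by (rule cat_sim_sym)
    then have "p z A / p x A = u z / u x" using U[OF A _ x] z by blast
    then show ?thesis using ppos[OF A x] u_pos[OF xX] by (simp add: field_simps)
  qed
  then show ?thesis unfolding ps_def by (simp add: sum_distrib_left)
qed


lemma ps_pos: "A \<in> menus X \<Longrightarrow> S \<subseteq> A \<Longrightarrow> S \<noteq> {} \<Longrightarrow> ps S A > 0"
proof -
  assume A: "A \<in> menus X" and S: "S \<subseteq> A" "S \<noteq> {}"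
  have "S \<subseteq> X" using A S by (auto simp: menus_def)
  then have "finite S" using fin finite_subset by blast
  then show ?thesis unfolding ps_def using S ppos[OF A] by (intro sum_pos) auto
qed

definition G where "G S T = ps S (S \<union> T) / ps T (S \<union> T)"

lemma G_pos: "S \<subseteq> X \<Longrightarrow> T \<subseteq> X \<Longrightarrow> S \<noteq> {} \<Longrightarrow> T \<noteq> {} \<Longrightarrow> G S T > 0"
proof -
  assume h: "S \<subseteq> X" "T \<subseteq> X" "S \<noteq> {}" "T \<noteq> {}"
  have M: "S \<union> T \<in> menus X" using h by (simp add: menus_def)
  show ?thesis unfolding G_def using ps_pos[OF M, of S] ps_pos[OF M, of T] h by simp
qed

lemma G_inv: "S \<subseteq> X \<Longrightarrow> T \<subseteq> X \<Longrightarrow> S \<noteq> {} \<Longrightarrow> T \<noteq> {} \<Longrightarrow> G S T * G T S = 1"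
proof -
  assume h: "S \<subseteq> X" "T \<subseteq> X" "S \<noteq> {}" "T \<noteq> {}"
  have M: "S \<union> T \<in> menus X" using h by (simp add: menus_def)
  have "ps S (S \<union> T) > 0" "ps T (S \<union> T) > 0" using ps_pos[OF M, of S] ps_pos[OF M, of T] h by auto
  then show ?thesis unfolding G_def by (simp add: Un_commute)
qed

lemma BR0:
  assumes A: "A \<in> menus X" and x: "x \<in> A" and y: "y \<in> A" and nxy: "\<not> cs x y"
  shows "ps (A \<inter> cls x) A / ps (A \<inter> cls y) A = G (A \<inter> cls x) (A \<inter> cls y)"
proof -
  have AX: "A \<subseteq> X" using A by (simp add: menus_def)
  have xX: "x \<in> X" and yX: "y \<in> X" using AX x y by auto
  define S where "S = A \<inter> cls x"
  define T where "T = A \<inter> cls y"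
  define D where "D = S \<union> T"
  have dis: "cls x \<inter> cls y = {}" using cls_disj[OF xX yX nxy] .
  have xS: "x \<in> S" using x self_cls[OF xX] S_def by auto
  have yT: "y \<in> T" using y self_cls[OF yX] T_def by auto
  have DA: "D \<subseteq> A" unfolding D_def S_def T_def by auto
  have D: "D \<in> menus X" using DA AX xS by (auto simp: menus_def D_def)
  have xD: "x \<in> D" and yD: "y \<in> D" using xS yT D_def by auto
  have Dx: "D \<inter> cls x = S" and Dy: "D \<inter> cls y = T" using dis unfolding D_def S_def T_def by auto
  have ind: "p x (D \<union> Z) / p y (D \<union> Z) = p x D / p y D"
    if "finite Z" "Z \<subseteq> X - (cls x \<union> cls y)" for Z
    using that
  proof (induction Z rule: finite_induct)
    case empty then show ?case by simp
  next
    case (insert z Z)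
    have zX: "z \<in> X" and zn: "z \<notin> cls x" "z \<notin> cls y" using insert.prems by auto
    have M: "D \<union> Z \<in> menus X" using D insert.prems by (auto simp: menus_def)
    have zM: "z \<notin> D \<union> Z" using insert.hyps zn unfolding D_def S_def T_def by auto
    have c1: "\<not> cs x z" using zn in_cls[OF xX zX] by blast
    have c2: "\<not> cs y z" using zn in_cls[OF yX zX] by blast
    have "p x (D \<union> Z) / p y (D \<union> Z) = p x (insert z (D \<union> Z)) / p y (insert z (D \<union> Z))"
      using isa_use[OF M _ _ zX zM] xD yD c1 c2 by blast
    then show ?case using insert.IH insert.prems by simp
  qed
  have "finite (A - D)" using fin AX finite_subset by blast
  moreover have "A - D \<subseteq> X - (cls x \<union> cls y)" using AX unfolding D_def S_def T_def by auto
  moreover have "D \<union> (A - D) = A" using DA by blast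
  ultimately have rat: "p x A / p y A = p x D / p y D" using ind[of "A - D"] by simp
  have b1: "ps S A = p x A / u x * (\<Sum>z\<in>S. u z)" using blocksum[OF A x] S_def by simp
  have b2: "ps T A = p y A / u y * (\<Sum>z\<in>T. u z)" using blocksum[OF A y] T_def by simp
  have b3: "ps S D = p x D / u x * (\<Sum>z\<in>S. u z)" using blocksum[OF D xD] Dx by simp
  have b4: "ps T D = p y D / u y * (\<Sum>z\<in>T. u z)" using blocksum[OF D yD] Dy by simp
  have pos: "p x A > 0" "p y A > 0" "p x D > 0" "p y D > 0" "u x > 0" "u y > 0"
    using ppos[OF A x] ppos[OF A y] ppos[OF D xD] ppos[OF D yD] u_pos[OF xX] u_pos[OF yX] by auto
  have sT: "(\<Sum>z\<in>T. u z) > 0"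
  proof -
    have "finite T" using fin AX T_def finite_subset by blast
    moreover have "\<forall>z\<in>T. u z > 0" using u_pos cls_sub T_def by blast
    ultimately show ?thesis using yT by (intro sum_pos) auto
  qed
  have "ps S A / ps T A = ps S D / ps T D"
    unfolding b1 b2 b3 b4 using rat pos sT by (simp add: field_simps)
  then show ?thesis unfolding G_def D_def[symmetric] S_def[symmetric] T_def[symmetric] .
qed

lemma BR:
  assumes A: "A \<in> menus X" and xX: "x \<in> X" and yX: "y \<in> X" and nxy: "\<not> cs x y"
    and nx: "A \<inter> cls x \<noteq> {}" and ny: "A \<inter> cls y \<noteq> {}"
  shows "ps (A \<inter> cls x) A / ps (A \<inter> cls y) A = G (A \<inter> cls x) (A \<inter> cls y)"
proof -
  obtain x' where x': "x' \<in> A" "x' \<in> cls x" using nx by blast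
  obtain y' where y': "y' \<in> A" "y' \<in> cls y" using ny by blast
  have ex: "cls x' = cls x" using cls_eq[OF xX x'(2)] .
  have ey: "cls y' = cls y" using cls_eq[OF yX y'(2)] .
  have x'X: "x' \<in> X" and y'X: "y' \<in> X" using x' y' cls_sub by auto
  have "\<not> cs x' y'"
  proof
    assume "cs x' y'"
    then have "y' \<in> cls x'" using in_cls[OF x'X y'X] by blast
    moreover have "y' \<in> cls y'" using self_cls[OF y'X] .
    ultimately show False using cls_disj[OF xX yX nxy] ex ey by auto
  qed
  then show ?thesis using BR0[OF A x'(1) y'(1)] ex ey by simp
qed

lemma CO:
  assumes sX: "s \<in> X" and tX: "t \<in> X" and rX: "r \<in> X"
    and st: "\<not> cs s t" and tr: "\<not> cs t r" and sr: "\<not> cs s r"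
    and S: "S \<subseteq> cls s" "S \<noteq> {}" and T: "T \<subseteq> cls t" "T \<noteq> {}" and R: "R \<subseteq> cls r" "R \<noteq> {}"
  shows "G S T * G T R = G S R"
proof -
  define M where "M = S \<union> T \<union> R"
  have d1: "cls s \<inter> cls t = {}" using cls_disj[OF sX tX st] .
  have d2: "cls t \<inter> cls r = {}" using cls_disj[OF tX rX tr] .
  have d3: "cls s \<inter> cls r = {}" using cls_disj[OF sX rX sr] .
  have M: "M \<in> menus X" using S T R cls_sub unfolding M_def menus_def by blast
  have MS: "M \<inter> cls s = S" using S T R d1 d3 unfolding M_def by blast
  have MT: "M \<inter> cls t = T" using S T R d1 d2 unfolding M_def by blast
  have MR: "M \<inter> cls r = R" using S T R d2 d3 unfolding M_def by blast
  have g1: "ps S M / ps T M = G S T" using BR[OF M sX tX st] MS MT S T by simp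
  have g2: "ps T M / ps R M = G T R" using BR[OF M tX rX tr] MT MR T R by simp
  have g3: "ps S M / ps R M = G S R" using BR[OF M sX rX sr] MS MR S R by simp
  have "ps T M > 0" using ps_pos[OF M, of T] T unfolding M_def by blast
  then show ?thesis unfolding g1[symmetric] g2[symmetric] g3[symmetric] by simp
qed

end


locale isa3 = isa_loc +
  fixes a b c
  assumes aX: "a \<in> X" and bX: "b \<in> X" and cX: "c \<in> X"
    and ab: "\<not> cs a b" and bc: "\<not> cs b c" and ac: "\<not> cs a c"
begin

lemma ncsym: "\<not> cs x y \<Longrightarrow> \<not> cs y x"
proof
  assume "\<not> cs x y" "cs y x"
  then show False using cat_sim_sym[of X p y x] by simp
qed

lemma ba: "\<not> cs b a" and cb: "\<not> cs c b" and ca: "\<not> cs c a"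
  using ncsym[OF ab] ncsym[OF bc] ncsym[OF ac] by auto

definition v where
  "v S = (if S = {} then 0 else if S \<subseteq> cls a then G S {b} * G {b} {a} else G S {a})"

lemma v_pos: "S \<subseteq> X \<Longrightarrow> S \<noteq> {} \<Longrightarrow> v S > 0"
  unfolding v_def using G_pos aX bX by auto

lemma sub_clsa:
  assumes sX: "s \<in> X" and S: "S \<subseteq> cls s" "S \<noteq> {}"
  shows "S \<subseteq> cls a \<longleftrightarrow> cs a s"
proof
  assume h: "S \<subseteq> cls a"
  obtain s' where s': "s' \<in> S" using S by blast
  have "cls s' = cls s" using cls_eq[OF sX] s' S by blast
  moreover have "cls s' = cls a" using cls_eq[OF aX] s' h by blast
  moreover have "s \<in> cls s" using self_cls[OF sX] .
  ultimately have "s \<in> cls a" by simp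
  then show "cs a s" using in_cls[OF aX sX] by blast
next
  assume "cs a s"
  then have "s \<in> cls a" using in_cls[OF aX sX] by blast
  then have "cls s = cls a" using cls_eq[OF aX] by blast
  then show "S \<subseteq> cls a" using S by simp
qed

lemma sing: "r \<in> X \<Longrightarrow> {r} \<subseteq> cls r" using self_cls by blast

lemma csym: "cs x y \<Longrightarrow> cs y x" by (rule cat_sim_sym)

lemma ncs_trans: "x \<in> X \<Longrightarrow> y \<in> X \<Longrightarrow> z \<in> X \<Longrightarrow> cs x y \<Longrightarrow> \<not> cs y z \<Longrightarrow> \<not> cs x z"
proof
  assume h: "x \<in> X" "y \<in> X" "z \<in> X" "cs x y" "\<not> cs y z" "cs x z"
  have "cs y x" using csym[OF h(4)] .
  then have "cs y z" using cs_trans[OF h(2) h(1) h(3) _ h(6)] by simp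
  then show False using h(5) by simp
qed

lemma L:
  assumes sX: "s \<in> X" and S: "S \<subseteq> cls s" "S \<noteq> {}" and rX: "r \<in> X" and sr: "\<not> cs s r"
  shows "v S = G S {r} * v {r}"
proof -
  have SX: "S \<subseteq> X" using S cls_sub by blast
  have rs: "\<not> cs r s" using ncsym[OF sr] .
  note sa = sub_clsa[OF sX S]
  have ra: "{r} \<subseteq> cls a \<longleftrightarrow> cs a r" using sub_clsa[OF rX sing[OF rX]] by simp
  have vS1: "\<not> cs a s \<Longrightarrow> v S = G S {a}" unfolding v_def using S sa by simp
  have vS2: "cs a s \<Longrightarrow> v S = G S {b} * G {b} {a}" unfolding v_def using S sa by simp
  have vr1: "\<not> cs a r \<Longrightarrow> v {r} = G {r} {a}" unfolding v_def using ra by simp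
  have vr2: "cs a r \<Longrightarrow> v {r} = G {r} {b} * G {b} {a}" unfolding v_def using ra by simp
  note sgl = sing[OF aX] sing[OF bX] sing[OF cX] sing[OF rX]
  note COs = CO[OF sX _ _ _ _ _ S]
  note COr = CO[OF rX _ _ _ _ _ sing[OF rX] insert_not_empty]
  note COc = CO[OF cX _ _ _ _ _ sing[OF cX] insert_not_empty]
  show ?thesis
  proof (cases "cs a s")
    case False
    note as = False
    have sa': "\<not> cs s a" using ncsym[OF as] .
    show ?thesis
    proof (cases "cs a r")
      case False
      have "G S {r} * G {r} {a} = G S {a}"
        using COs[OF rX aX sr ncsym[OF False] sa' sgl(4) _ sgl(1)] by blast
      then show ?thesis using vS1[OF as] vr1[OF False] by simp
    next
      case True
      have rb: "\<not> cs r b" using ncs_trans[OF rX aX bX csym[OF True] ab] .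
      have rc: "\<not> cs r c" using ncs_trans[OF rX aX cX csym[OF True] ac] .
      show ?thesis
      proof (cases "cs s b")
        case False
        have e1: "G S {r} * G {r} {b} = G S {b}" using COs[OF rX bX sr rb False sgl(4) _ sgl(2)] by blast
        have e2: "G S {b} * G {b} {a} = G S {a}" using COs[OF bX aX False ba sa' sgl(2) _ sgl(1)] by blast
        have "v S = G S {b} * G {b} {a}" using vS1[OF as] e2 by simp
        also have "\<dots> = G S {r} * (G {r} {b} * G {b} {a})" using e1 by (simp add: mult.assoc)
        finally show ?thesis using vr2[OF True] by simp
      next
        case True
        have sc: "\<not> cs s c" using ncs_trans[OF sX bX cX True bc] .
        have cr: "\<not> cs c r" using ncsym[OF rc] .
        have e1: "G S {c} * G {c} {r} = G S {r}" using COs[OF cX rX sc cr sr sgl(3) _ sgl(4)] by blast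
        have e2: "G {r} {c} * G {c} {b} = G {r} {b}" using COr[OF cX bX rc cb rb sgl(3) _ sgl(2)] by blast
        have e3: "G {c} {r} * G {r} {c} = 1" using G_inv[of "{c}" "{r}"] cX rX by simp
        have e4: "G {c} {b} * G {b} {a} = G {c} {a}" using COc[OF bX aX cb ba ca sgl(2) _ sgl(1)] by blast
        have e5: "G S {c} * G {c} {a} = G S {a}" using COs[OF cX aX sc ca sa' sgl(3) _ sgl(1)] by blast
        have vr: "v {r} = G {r} {b} * G {b} {a}" using vr2 \<open>cs a r\<close> by blast
        have "G S {r} * v {r} = (G S {c} * G {c} {r}) * ((G {r} {c} * G {c} {b}) * G {b} {a})"
          unfolding vr e1 e2 by (rule refl)
        also have "\<dots> = G S {c} * (G {c} {r} * G {r} {c}) * (G {c} {b} * G {b} {a})"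
          by (simp only: mult.assoc)
        also have "\<dots> = G S {a}" using e3 e4 e5 by simp
        finally show ?thesis using vS1[OF as] by simp
      qed
    qed
  next
    case True
    note as = True
    have nar: "\<not> cs a r" using ncs_trans[OF aX sX rX True sr] .
    have ra': "\<not> cs r a" using ncsym[OF nar] .
    have sb: "\<not> cs s b" using ncs_trans[OF sX aX bX csym[OF True] ab] .
    have sc: "\<not> cs s c" using ncs_trans[OF sX aX cX csym[OF True] ac] .
    show ?thesis
    proof (cases "cs r b")
      case False
      have e1: "G S {r} * G {r} {b} = G S {b}" using COs[OF rX bX sr False sb sgl(4) _ sgl(2)] by blast
      have e2: "G {r} {b} * G {b} {a} = G {r} {a}" using COr[OF bX aX False ba ra' sgl(2) _ sgl(1)] by blast
      have "v S = G S {r} * (G {r} {b} * G {b} {a})" using vS2[OF as] e1 by (simp add: mult.assoc)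
      then show ?thesis using e2 vr1[OF nar] by simp
    next
      case True
      have rc: "\<not> cs r c" using ncs_trans[OF rX bX cX True bc] .
      have e1: "G S {c} * G {c} {b} = G S {b}" using COs[OF cX bX sc cb sb sgl(3) _ sgl(2)] by blast
      have e2: "G {c} {b} * G {b} {a} = G {c} {a}" using COc[OF bX aX cb ba ca sgl(2) _ sgl(1)] by blast
      have e3: "G S {r} * G {r} {c} = G S {c}" using COs[OF rX cX sr rc sc sgl(4) _ sgl(3)] by blast
      have e4: "G {r} {c} * G {c} {a} = G {r} {a}" using COr[OF cX aX rc ca ra' sgl(3) _ sgl(1)] by blast
      have "v S = G S {c} * G {c} {b} * G {b} {a}" using vS2[OF as] e1 by simp
      also have "\<dots> = G S {c} * G {c} {a}" using e2 by (simp add: mult.assoc)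
      also have "\<dots> = G S {r} * (G {r} {c} * G {c} {a})" unfolding e3[symmetric] by (simp add: mult.assoc)
      also have "\<dots> = G S {r} * v {r}" using e4 vr1[OF nar] by simp
      finally show ?thesis .
    qed
  qed
qed


lemma not2:
  assumes xX: "x \<in> X" and h1: "cs x y" and h2: "cs x z" and yX: "y \<in> X" and zX: "z \<in> X"
  shows "cs y z"
  using cs_trans[OF yX xX zX csym[OF h1] h2] .

lemma third:
  assumes sX: "s \<in> X" and tX: "t \<in> X" and st: "\<not> cs s t"
  obtains r where "r \<in> X" "\<not> cs s r" "\<not> cs t r"
proof -
  have ab': "cs a b \<Longrightarrow> False" using ab by simp
  have bc': "cs b c \<Longrightarrow> False" using bc by simp
  have ac': "cs a c \<Longrightarrow> False" using ac by simp
  have sab: "cs s a \<Longrightarrow> cs s b \<Longrightarrow> False" using not2[OF sX _ _ aX bX] ab' by blast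
  have sbc: "cs s b \<Longrightarrow> cs s c \<Longrightarrow> False" using not2[OF sX _ _ bX cX] bc' by blast
  have sac: "cs s a \<Longrightarrow> cs s c \<Longrightarrow> False" using not2[OF sX _ _ aX cX] ac' by blast
  have tab: "cs t a \<Longrightarrow> cs t b \<Longrightarrow> False" using not2[OF tX _ _ aX bX] ab' by blast
  have tbc: "cs t b \<Longrightarrow> cs t c \<Longrightarrow> False" using not2[OF tX _ _ bX cX] bc' by blast
  have tac: "cs t a \<Longrightarrow> cs t c \<Longrightarrow> False" using not2[OF tX _ _ aX cX] ac' by blast
  consider "\<not> cs s a \<and> \<not> cs t a" | "\<not> cs s b \<and> \<not> cs t b" | "\<not> cs s c \<and> \<not> cs t c"
    using sab sbc sac tab tbc tac by blast
  then show ?thesis using that aX bX cX by metis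
qed

lemma V:
  assumes sX: "s \<in> X" and tX: "t \<in> X" and st: "\<not> cs s t"
    and S: "S \<subseteq> cls s" "S \<noteq> {}" and T: "T \<subseteq> cls t" "T \<noteq> {}"
  shows "G S T = v S / v T"
proof -
  obtain r where rX: "r \<in> X" and sr: "\<not> cs s r" and tr: "\<not> cs t r" using third[OF sX tX st] by blast
  have l1: "v S = G S {r} * v {r}" using L[OF sX S rX sr] .
  have l2: "v T = G T {r} * v {r}" using L[OF tX T rX tr] .
  have co: "G S T * G T {r} = G S {r}" using CO[OF sX tX rX st tr sr S T sing[OF rX] insert_not_empty] .
  have p1: "v {r} > 0" using v_pos rX by simp
  have p2: "G T {r} > 0" using G_pos T cls_sub rX by blast
  show ?thesis unfolding l1 l2 co[symmetric] using p1 p2 by simp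
qed

definition PP where "PP = cls ` X"

lemma partition: "is_partition X PP"
  unfolding is_partition_def PP_def
proof (intro conjI ballI impI)
  fix B assume "B \<in> cls ` X" then show "B \<noteq> {}" using self_cls by blast
next
  show "\<Union> (cls ` X) = X" using self_cls cls_sub by blast
next
  fix B C assume B: "B \<in> cls ` X" and C: "C \<in> cls ` X" and BC: "B \<noteq> C"
  obtain x where x: "x \<in> X" "B = cls x" using B by blast
  obtain y where y: "y \<in> X" "C = cls y" using C by blast
  have "\<not> cs x y"
  proof
    assume "cs x y"
    then have "y \<in> cls x" using in_cls x y by blast
    then have "cls y = cls x" using cls_eq x by blast
    then show False using BC x y by simp
  qed
  then show "B \<inter> C = {}" using cls_disj x y by simp
qed

lemma PP_fin: "finite PP" unfolding PP_def using fin by simp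

lemma main_eq:
  assumes A: "A \<in> menus X" and B: "B \<in> PP" and x: "x \<in> A \<inter> B"
  shows "p x A = v (A \<inter> B) / (\<Sum>C\<in>PP. v (A \<inter> C)) * (u x / (\<Sum>z\<in>A \<inter> B. u z))"
proof -
  have AX: "A \<subseteq> X" using A by (simp add: menus_def)
  have xX: "x \<in> X" using x AX by auto
  obtain w where w: "w \<in> X" "B = cls w" using B PP_def by auto
  have Bx: "B = cls x" using cls_eq[OF w(1)] x w by auto
  have xA: "x \<in> A" using x by simp
  define D where "D = (\<Sum>C\<in>PP. v (A \<inter> C))"
  have cross: "ps (A \<inter> C) A * v (A \<inter> B) = ps (A \<inter> B) A * v (A \<inter> C)" if C: "C \<in> PP" for C
  proof -
    obtain y where y: "y \<in> X" "C = cls y" using C PP_def by auto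
    show ?thesis
    proof (cases "A \<inter> C = {}")
      case True then show ?thesis by (simp add: ps_def v_def)
    next
      case False
      show ?thesis
      proof (cases "cs x y")
        case True
        then have "y \<in> cls x" using in_cls xX y by blast
        then have "C = B" using cls_eq xX y Bx by blast
        then show ?thesis by simp
      next
        case nxy: False
        have ne: "A \<inter> cls x \<noteq> {}" using x Bx by blast
        have br: "ps (A \<inter> cls x) A / ps (A \<inter> cls y) A = G (A \<inter> cls x) (A \<inter> cls y)"
          using BR[OF A xX y(1) nxy ne] False y by simp
        have vv: "G (A \<inter> cls x) (A \<inter> cls y) = v (A \<inter> cls x) / v (A \<inter> cls y)"
          using V[OF xX y(1) nxy _ ne _ ] False y by blast
        have q1: "ps (A \<inter> cls y) A > 0" using ps_pos[OF A, of "A \<inter> cls y"] False y by blast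
        have q2: "v (A \<inter> cls y) > 0" using v_pos[of "A \<inter> cls y"] False y AX by blast
        have "ps (A \<inter> cls x) A / ps (A \<inter> cls y) A = v (A \<inter> cls x) / v (A \<inter> cls y)" using br vv by simp
        then have "ps (A \<inter> cls x) A * v (A \<inter> cls y) = v (A \<inter> cls x) * ps (A \<inter> cls y) A"
          using q1 q2 by (simp add: field_simps)
        then show ?thesis using Bx y by (simp add: mult.commute)
      qed
    qed
  qed
  have sumP: "(\<Sum>C\<in>PP. ps (A \<inter> C) A) = 1"
  proof -
    have "(\<Sum>C\<in>PP. ps (A \<inter> C) A) = (\<Sum>z\<in>(\<Union>C\<in>PP. A \<inter> C). p z A)"
      unfolding ps_def
    proof (rule sum.UNION_disjoint[symmetric])
      show "finite PP" using PP_fin .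
      show "\<forall>C\<in>PP. finite (A \<inter> C)" using fin AX finite_subset by blast
      show "\<forall>i\<in>PP. \<forall>j\<in>PP. i \<noteq> j \<longrightarrow> A \<inter> i \<inter> (A \<inter> j) = {}"
        using partition unfolding is_partition_def by blast
    qed
    also have "(\<Union>C\<in>PP. A \<inter> C) = A"
    proof -
      have "(\<Union>C\<in>PP. A \<inter> C) = A \<inter> \<Union>PP" by blast
      also have "\<Union>PP = X" using partition unfolding is_partition_def by blast
      finally show ?thesis using AX by blast
    qed
    also have "(\<Sum>z\<in>A. p z A) = 1" using pos A unfolding pos_scf_def by blast
    finally show ?thesis .
  qed
  have "(\<Sum>C\<in>PP. ps (A \<inter> C) A) * v (A \<inter> B) = ps (A \<inter> B) A * D"
    unfolding D_def sum_distrib_left sum_distrib_right using cross by (rule sum.cong[OF refl])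
  then have eqv: "v (A \<inter> B) = ps (A \<inter> B) A * D" using sumP by simp
  have vpos: "v (A \<inter> B) > 0" using v_pos[of "A \<inter> B"] x AX by blast
  have pspos: "ps (A \<inter> B) A > 0" using ps_pos[OF A, of "A \<inter> B"] x by blast
  have Dnz: "D \<noteq> 0" using eqv vpos by auto
  have psv: "ps (A \<inter> B) A = v (A \<inter> B) / D" using eqv Dnz by simp
  have bs: "ps (A \<inter> B) A = p x A / u x * (\<Sum>z\<in>A \<inter> B. u z)" using blocksum[OF A xA] Bx by simp
  have upos: "u x > 0" using u_pos[OF xX] .
  have spos: "(\<Sum>z\<in>A \<inter> B. u z) > 0"
  proof -
    have "finite (A \<inter> B)" using fin AX finite_subset by blast
    moreover have "\<forall>z\<in>A \<inter> B. u z > 0" using u_pos AX by blast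
    ultimately show ?thesis using x by (intro sum_pos) auto
  qed
  have "p x A = ps (A \<inter> B) A * (u x / (\<Sum>z\<in>A \<inter> B. u z))" using bs upos spos by (simp add: field_simps)
  then show ?thesis using psv D_def by simp
qed

lemma rep: "NSC_rep X p v u PP"
  unfolding NSC_rep_def
proof (intro conjI ballI allI impI)
  show "is_partition X PP" using partition .
  show "\<And>x. x \<in> X \<Longrightarrow> 0 < u x" using u_pos .
  show "v {} = 0" by (simp add: v_def)
  fix B S assume "B \<in> PP" "S \<subseteq> B"
  then have "S \<subseteq> X" using PP_def cls_sub by blast
  then show "0 \<le> v S" using v_pos[of S] by (cases "S = {}") (auto simp: v_def)
next
  fix A B x assume "A \<in> menus X" "B \<in> PP" "x \<in> A \<inter> B"
  then show "p x A = v (A \<inter> B) / (\<Sum>C\<in>PP. v (A \<inter> C)) * (u x / (\<Sum>b\<in>A \<inter> B. u b))"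
    using main_eq by blast
qed

lemma nondeg: "nondegenerate_NSC X p"
  unfolding nondegenerate_NSC_def
proof (intro exI conjI ballI impI)
  show "NSC_rep X p v u PP" using rep .
  fix B C assume B: "B \<in> PP" and C: "C \<in> PP" and d: "degenerate_block v u B \<and> degenerate_block v u C"
  show "B = C"
  proof (rule ccontr)
    assume BC: "B \<noteq> C"
    obtain x where x: "x \<in> B" "\<forall>S. S \<subseteq> B \<and> x \<in> S \<longrightarrow> (\<Sum>z\<in>S. u z) / v S = u x / v {x}"
      using d unfolding degenerate_block_def by blast
    obtain y where y: "y \<in> C" "\<forall>S. S \<subseteq> C \<and> y \<in> S \<longrightarrow> (\<Sum>z\<in>S. u z) / v S = u y / v {y}"
      using d unfolding degenerate_block_def by blast
    have s: "cs x y" using rep_deg_sim[OF rep pos B C BC x(1) y(1) x(2) y(2)] .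
    obtain w where w: "w \<in> X" "B = cls w" using B PP_def by auto
    have xX: "x \<in> X" using x w cls_sub by blast
    have yX: "y \<in> X" using y C PP_def cls_sub by blast
    have "cls x = B" using cls_eq[OF w(1)] x w by simp
    moreover have "y \<in> cls x" using in_cls[OF xX yX] s by blast
    ultimately have "y \<in> B" by simp
    then show False using partition B C BC y unfolding is_partition_def by blast
  qed
qed

end

theorem theorem1:
  fixes X :: "'a set" and p :: "'a \<Rightarrow> 'a set \<Rightarrow> real"
  assumes "pos_scf X p"
    and "a \<in> X" and "b \<in> X" and "c \<in> X"
    and "\<not> cat_sim X p a b" and "\<not> cat_sim X p b c" and "\<not> cat_sim X p a c"
  shows "ISA X p \<longleftrightarrow> nondegenerate_NSC X p"
proof
  assume h: "ISA X p"
  interpret I: isa3 X p a b c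
    by (unfold_locales) (use assms h in auto)
  show "nondegenerate_NSC X p" using I.nondeg .
next
  assume "nondegenerate_NSC X p"
  then show "ISA X p" using nsc_ISA assms(1) by blast
qed

end
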